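(* Let $\mathbb{X},\mathbb{Y}$ be Euclidean spaces, $\mathbb{Z}=\mathbb{X}\times\mathbb{Y}$ equipped with a norm $\|\cdot\|$ with dual norm $\|\cdot\|_*$, and $\mathcal{X}\subseteq\mathbb{X}$, $\mathcal{Y}\subseteq\mathbb{Y}$ closed convex sets, $\mathcal{Z}=\mathcal{X}\times\mathcal{Y}$. Let $\phi:\mathcal{Z}\to\mathbb{R}$ be convex-concave (convex in $x$, concave in $y$) and differentiable, with $F(z)=(\partial_x\phi(z),-\partial_y\phi(z))$ satisfying $\sup_{z\in\mathcal{Z}}\|F(z)\|_*<\infty$ and $\|F(z)-F(z')\|_*\le L\|z-z'\|$ for all $z,z'\in\mathcal{Z}$. Let $\psi_{\mathbb{Z}}$ be smooth and $1$-strongly convex w.r.t. $\|\cdot\|$, with Bregman divergence $D_{\mathbb{Z}}(w,z)=\psi_{\mathbb{Z}}(w)-\psi_{\mathbb{Z}}(z)-\langle\nabla\psi_{\mathbb{Z}}(z),w-z\rangle$, and let $\Omega=\sup_{z,z'\in\mathcal{Z}}D_{\mathbb{Z}}(z,z')$. For $\xi,z\in\mathbb{Z}$ let $\mathrm{Prox}^{\mathcal{Z}}_{\langle\xi,\cdot\rangle}(z)=\arg\min_{w\in\mathcal{Z}}\{\langle\xi,w\rangle+D_{\mathbb{Z}}(w,z)\}$. Let $z^0\in\mathcal{Z}$, stepsizes $\tau_t>0$, and let Mirror Prox generate, for $t=0,1,2,\dots$, $\tilde z^t=\mathrm{Prox}^{\mathcal{Z}}_{\langle\tau_tF(z^t),\cdot\rangle}(z^t)$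 and $z^{t+1}=\mathrm{Prox}^{\mathcal{Z}}_{\langle\tau_tF(\tilde z^t),\cdot\rangle}(z^t)$. Let $\delta_t=\tau_t\langle F(\tilde z^t),\tilde z^t-z^{t+1}\rangle-D_{\mathbb{Z}}(z^{t+1},z^t)$. Let $w_t\ge0$ be nondecreasing, $S_T=\sum_{t=1}^Tw_t\tau_t$ (assumed positive), and $\bar z^T=(\bar x^T,\bar y^T)=\frac1{S_T}\sum_{t=1}^Tw_t\tau_t\tilde z^t$. Then for every $T\ge1$ and every $(x,y)\in\mathcal{X}\times\mathcal{Y}$, $$\phi(\bar x^T,y)-\phi(x,\bar y^T)\le\frac{w_T\Omega+\sum_{t=1}^Tw_t\delta_t}{S_T}.$$ In particular, if $\tau_t=\frac1L$ for all $t$ and $w_t=t^q$ with $q\ge0$, then $\delta_t\le0$ for all $t$ and $$\phi(\bar x^T,y)-\phi(x,\bar y^T)\le\frac{(q+1)L\Omega}{T}.$$ *)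

theory Defs
  imports "HOL-Analysis.Analysis"
begin

text \<open>An arbitrary norm on a real vector space (not necessarily the Euclidean one).\<close>
definition is_norm :: "('a::real_vector \<Rightarrow> real) \<Rightarrow> bool" where
  "is_norm nrm \<longleftrightarrow>
     (\<forall>a. 0 \<le> nrm a) \<and> (\<forall>a. nrm a = 0 \<longleftrightarrow> a = 0) \<and>
     (\<forall>a b. nrm (a + b) \<le> nrm a + nrm b) \<and>
     (\<forall>c a. nrm (c *\<^sub>R a) = \<bar>c\<bar> * nrm a)"

definition dual_norm :: "('a::real_inner \<Rightarrow> real) \<Rightarrow> 'a \<Rightarrow> real" where
  "dual_norm nrm \<xi> = Sup {\<xi> \<bullet> z | z. nrm z \<le> 1}"

definition strongly_convex_wrt :: "('a::real_vector \<Rightarrow> real) \<Rightarrow> ('a \<Rightarrow> real) \<Rightarrow> bool" where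
  "strongly_convex_wrt nrm f \<longleftrightarrow>
     (\<forall>a b u. 0 \<le> u \<and> u \<le> 1 \<longrightarrow>
        f (u *\<^sub>R a + (1 - u) *\<^sub>R b)
          \<le> u * f a + (1 - u) * f b - 1/2 * u * (1 - u) * (nrm (a - b))\<^sup>2)"

definition bregman :: "('a::real_inner \<Rightarrow> real) \<Rightarrow> ('a \<Rightarrow> 'a) \<Rightarrow> 'a \<Rightarrow> 'a \<Rightarrow> real" where
  "bregman psi gpsi w z = psi w - psi z - gpsi z \<bullet> (w - z)"

definition prox :: "('a::real_inner \<Rightarrow> real) \<Rightarrow> ('a \<Rightarrow> 'a) \<Rightarrow> 'a set \<Rightarrow> 'a \<Rightarrow> 'a \<Rightarrow> 'a" where
  "prox psi gpsi Zs \<xi> z = arg_min_on (\<lambda>w. \<xi> \<bullet> w + bregman psi gpsi w z) Zs"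

definition sp_op :: "('x \<times> 'y \<Rightarrow> 'x) \<Rightarrow> ('x \<times> 'y \<Rightarrow> 'y::real_vector) \<Rightarrow> 'x \<times> 'y \<Rightarrow> 'x \<times> 'y" where
  "sp_op gx gy z = (gx z, - gy z)"

end

theory Submission
  imports Defs
begin

lemma deriv_bound:
  fixes f :: "real \<Rightarrow> real"
  assumes d: "(f has_real_derivative l) (at 0 within {0..1})"
    and b: "\<And>u. 0 < u \<Longrightarrow> u < 1 \<Longrightarrow> f u - f 0 \<le> u * c + u^2 * K"
  shows "l \<le> c"
proof -
  have lim1: "((\<lambda>y. (f y - f 0) / (y - 0)) \<longlongrightarrow> l) (at 0 within {0..1})"
    using d has_field_derivative_iff by blast
  have lim2: "((\<lambda>y. y * K) \<longlongrightarrow> 0 * K) (at 0 within {0..1})"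
    by (intro tendsto_intros)
  have lim: "((\<lambda>y. (f y - f 0) / (y - 0) - y * K) \<longlongrightarrow> l - 0 * K) (at 0 within {0..1})"
    by (intro tendsto_diff lim1 lim2)
  have ev: "eventually (\<lambda>y. (f y - f 0) / (y - 0) - y * K \<le> c) (at 0 within {0..1})"
    unfolding eventually_at
  proof (intro exI[of _ 1] conjI ballI impI)
    fix y :: real assume y: "y \<in> {0..1}" "y \<noteq> 0 \<and> dist y 0 < 1"
    then have y0: "0 < y" "y < 1" by (auto simp: dist_real_def)
    have "f y - f 0 \<le> y * c + y^2 * K" using b y0 by auto
    then have "(f y - f 0) / y \<le> (y * c + y^2 * K) / y" using y0 by (simp add: divide_right_mono)
    also have "\<dots> = c + y * K" using y0 by (simp add: field_simps power2_eq_square)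
    finally show "(f y - f 0) / (y - 0) - y * K \<le> c" by simp
  qed simp
  have "\<not> trivial_limit (at (0::real) within {0..1})"
    by (simp add: at_within_Icc_at_right)
  from tendsto_upperbound[OF lim ev this] show ?thesis by simp
qed

lemma line_deriv:
  fixes g :: "'a::real_inner \<Rightarrow> real"
  assumes "(g has_derivative (\<lambda>h. G \<bullet> h)) (at p within S)"
    and "\<And>u. u \<in> {0..1} \<Longrightarrow> p + u *\<^sub>R d \<in> S"
  shows "((\<lambda>u. g (p + u *\<^sub>R d)) has_real_derivative (G \<bullet> d)) (at 0 within {0..1})"
proof -
  have f: "((\<lambda>u::real. p + u *\<^sub>R d) has_derivative (\<lambda>u. u *\<^sub>R d)) (at 0 within {0..1})"
    by (auto intro!: derivative_eq_intros)
  have "(g has_derivative (\<lambda>h. G \<bullet> h)) (at ((\<lambda>u::real. p + u *\<^sub>R d) 0) within ((\<lambda>u. p + u *\<^sub>R d) ` {0..1}))"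
    using assms(2) by simp (intro has_derivative_subset[OF assms(1)], auto)
  from has_derivative_in_compose[OF f this]
  have "((\<lambda>u. g (p + u *\<^sub>R d)) has_derivative (\<lambda>u. G \<bullet> (u *\<^sub>R d))) (at 0 within {0..1})" .
  moreover have "(\<lambda>u. G \<bullet> (u *\<^sub>R d)) = (*) (G \<bullet> d)" by (auto simp: mult.commute)
  ultimately show ?thesis unfolding has_field_derivative_def by simp
qed

lemma norm_props:
  assumes "is_norm nrm"
  shows "\<And>a. 0 \<le> nrm a" "\<And>a. nrm a = 0 \<longleftrightarrow> a = 0" "\<And>a b. nrm (a + b) \<le> nrm a + nrm b"
    "\<And>c a. nrm (c *\<^sub>R a) = \<bar>c\<bar> * nrm a" "\<And>a. nrm (- a) = nrm a" "\<And>a b. nrm (a - b) = nrm (b - a)"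
proof -
  show "\<And>a. 0 \<le> nrm a" "\<And>a. nrm a = 0 \<longleftrightarrow> a = 0" "\<And>a b. nrm (a + b) \<le> nrm a + nrm b"
    "\<And>c a. nrm (c *\<^sub>R a) = \<bar>c\<bar> * nrm a" using assms unfolding is_norm_def by auto
  then have *: "\<And>c a. nrm (c *\<^sub>R a) = \<bar>c\<bar> * nrm a" by auto
  show n: "\<And>a. nrm (- a) = nrm a" using *[of "-1"] by simp
  show "\<And>a b. nrm (a - b) = nrm (b - a)" using n by (metis minus_diff_eq)
qed

lemma norm_equiv:
  fixes nrm :: "'a::euclidean_space \<Rightarrow> real"
  assumes N: "is_norm nrm"
  shows "\<exists>c>0. \<forall>a. c * norm a \<le> nrm a"
proof -
  note np = norm_props[OF N]
  have "convex_on UNIV nrm"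
    unfolding convex_on_def
  proof (intro conjI ballI allI impI)
    fix x y :: 'a and u v :: real assume "0 \<le> u" "0 \<le> v" "u + v = 1"
    then show "nrm (u *\<^sub>R x + v *\<^sub>R y) \<le> u * nrm x + v * nrm y"
      using np(3)[of "u *\<^sub>R x" "v *\<^sub>R y"] np(4)[of u x] np(4)[of v y] by simp
  qed simp
  then have cont: "continuous_on UNIV nrm" by (intro convex_on_continuous) auto
  obtain b :: 'a where b: "b \<in> Basis" using nonempty_Basis by blast
  have "compact (sphere (0::'a) 1)" by simp
  moreover have "sphere (0::'a) 1 \<noteq> {}" using b by (auto simp: norm_Basis)
  moreover have "continuous_on (sphere 0 1) nrm" using cont by (rule continuous_on_subset) simp
  ultimately obtain a0 where a0: "a0 \<in> sphere 0 1" "\<forall>y\<in>sphere 0 1. nrm a0 \<le> nrm y"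
    using continuous_attains_inf by blast
  have "a0 \<noteq> 0" using a0 by auto
  then have c0: "0 < nrm a0" using np(1)[of a0] np(2)[of a0] by linarith
  have "nrm a0 * norm a \<le> nrm a" for a
  proof (cases "a = 0")
    case True then show ?thesis using np(1) by simp
  next
    case False
    then have "(1 / norm a) *\<^sub>R a \<in> sphere 0 1" by auto
    then have "nrm a0 \<le> nrm ((1 / norm a) *\<^sub>R a)" using a0 by blast
    also have "\<dots> = nrm a / norm a" using np(4) by simp
    finally show ?thesis using False by (simp add: field_simps)
  qed
  then show ?thesis using c0 by blast
qed

lemma dual_ineq:
  fixes nrm :: "'a::euclidean_space \<Rightarrow> real"
  assumes N: "is_norm nrm"
  shows "\<xi> \<bullet> v \<le> dual_norm nrm \<xi> * nrm v"
proof -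
  note np = norm_props[OF N]
  obtain c where c: "c > 0" "\<forall>a. c * norm a \<le> nrm a" using norm_equiv[OF N] by blast
  have bdd: "bdd_above {\<xi> \<bullet> z | z. nrm z \<le> 1}"
  proof (rule bdd_aboveI)
    fix t assume "t \<in> {\<xi> \<bullet> z | z. nrm z \<le> 1}"
    then obtain z where z: "t = \<xi> \<bullet> z" "nrm z \<le> 1" by blast
    have "c * norm z \<le> 1" using c z by (meson order_trans)
    then have nz: "norm z \<le> 1 / c" using c by (simp add: field_simps)
    have "t \<le> norm \<xi> * norm z" using z Cauchy_Schwarz_ineq2 by (metis norm_cauchy_schwarz)
    also have "\<dots> \<le> norm \<xi> * (1 / c)" using nz by (intro mult_left_mono) auto
    finally show "t \<le> norm \<xi> / c" by simp
  qed
  show ?thesis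
  proof (cases "v = 0")
    case True then show ?thesis using np(2)[of 0] by simp
  next
    case False
    then have nv: "0 < nrm v" using np(1)[of v] np(2)[of v] by linarith
    have "nrm ((1 / nrm v) *\<^sub>R v) = 1" using np(4) nv by simp
    then have "\<xi> \<bullet> ((1 / nrm v) *\<^sub>R v) \<le> dual_norm nrm \<xi>"
      unfolding dual_norm_def by (intro cSup_upper bdd) (metis (mono_tags, lifting) mem_Collect_eq order_refl)
    then have "(\<xi> \<bullet> v) / nrm v \<le> dual_norm nrm \<xi>" by simp
    then show ?thesis using nv by (simp add: field_simps)
  qed
qed

lemma breg_sc:
  fixes psi :: "'a::euclidean_space \<Rightarrow> real"
  assumes pd: "\<forall>p. (psi has_derivative (\<lambda>h. gpsi p \<bullet> h)) (at p)"
    and sc: "strongly_convex_wrt nrm psi"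
  shows "1/2 * (nrm (w - z))^2 \<le> bregman psi gpsi w z"
proof -
  define N where "N = (nrm (w - z))^2"
  define f where "f u = psi (z + u *\<^sub>R (w - z))" for u
  have d: "(f has_real_derivative (gpsi z \<bullet> (w - z))) (at 0 within {0..1})"
    unfolding f_def by (rule line_deriv[where S=UNIV]) (use pd has_derivative_at_withinI in auto)
  have "f u - f 0 \<le> u * (psi w - psi z - 1/2 * N) + u^2 * (1/2 * N)" if "0 < u" "u < 1" for u
  proof -
    have e: "z + u *\<^sub>R (w - z) = u *\<^sub>R w + (1 - u) *\<^sub>R z" by (simp add: algebra_simps)
    have "f u \<le> u * psi w + (1 - u) * psi z - 1/2 * u * (1 - u) * N"
      using sc that unfolding f_def e strongly_convex_wrt_def N_def by auto
    moreover have "u * psi w + (1 - u) * psi z - 1/2 * u * (1 - u) * N - psi z = u * (psi w - psi z - 1/2 * N) + u^2 * (1/2 * N)"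
      by (simp add: power2_eq_square field_simps)
    ultimately show ?thesis unfolding f_def by simp
  qed
  from deriv_bound[OF d this] show ?thesis unfolding bregman_def N_def by simp
qed

lemma prox_tp:
  fixes psi :: "'a::euclidean_space \<Rightarrow> real"
  assumes pd: "\<forall>p. (psi has_derivative (\<lambda>h. gpsi p \<bullet> h)) (at p)"
    and sc: "strongly_convex_wrt nrm psi"
    and N: "is_norm nrm"
    and Z: "closed Zs" "convex Zs" "Zs \<noteq> {}"
  shows "prox psi gpsi Zs \<xi> z \<in> Zs \<and>
    (\<forall>u\<in>Zs. \<xi> \<bullet> (prox psi gpsi Zs \<xi> z - u) \<le> bregman psi gpsi u z
        - bregman psi gpsi u (prox psi gpsi Zs \<xi> z) - bregman psi gpsi (prox psi gpsi Zs \<xi> z) z)"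
proof -
  define g where "g v = \<xi> \<bullet> v + bregman psi gpsi v z" for v
  obtain c where c: "c > 0" "\<forall>a. c * norm a \<le> nrm a" using norm_equiv[OF N] by blast
  obtain z1 where z1: "z1 \<in> Zs" using Z by blast
  define M where "M = g z1 - \<xi> \<bullet> z"
  define R where "R = max 1 ((norm \<xi> + \<bar>M\<bar> + 1) * 2 / c^2)"
  have far: "g v > g z1" if v: "norm (v - z) > R" for v
  proof -
    define r where "r = norm (v - z)"
    have r1: "r \<ge> 1" and r2: "r \<ge> (norm \<xi> + \<bar>M\<bar> + 1) * 2 / c^2" using v unfolding r_def R_def by auto
    have "c * r \<le> nrm (v - z)" using c unfolding r_def by auto
    then have "(c * r)^2 \<le> (nrm (v - z))^2" using c r1 by (intro power_mono) auto
    then have "1/2 * (c*r)^2 \<le> bregman psi gpsi v z" using breg_sc[OF pd sc, of v z] by linarith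
    moreover have "\<xi> \<bullet> (v - z) \<ge> - (norm \<xi> * r)"
    proof -
      have "\<bar>\<xi> \<bullet> (v - z)\<bar> \<le> norm \<xi> * r" unfolding r_def by (rule Cauchy_Schwarz_ineq2)
      then show ?thesis by linarith
    qed
    ultimately have g1: "g v \<ge> \<xi> \<bullet> z - norm \<xi> * r + 1/2 * c^2 * r^2"
      unfolding g_def by (simp add: inner_diff_right power_mult_distrib)
    have "1/2 * c^2 * r \<ge> norm \<xi> + \<bar>M\<bar> + 1" using r2 c by (simp add: field_simps)
    then have "r * (1/2 * c^2 * r) \<ge> r * (norm \<xi> + \<bar>M\<bar> + 1)" using r1 by (intro mult_left_mono) auto
    moreover have "r * (norm \<xi> + \<bar>M\<bar> + 1) \<ge> norm \<xi> * r + \<bar>M\<bar> + 1"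
    proof -
      have "r * (\<bar>M\<bar> + 1) \<ge> 1 * (\<bar>M\<bar> + 1)" using r1 by (intro mult_right_mono) auto
      then show ?thesis by (simp add: algebra_simps)
    qed
    ultimately have "1/2 * c^2 * r^2 - norm \<xi> * r > M" by (simp add: power2_eq_square algebra_simps)
    then show ?thesis using g1 unfolding M_def by linarith
  qed
  have contpsi: "continuous_on UNIV psi"
    using pd has_derivative_continuous continuous_at_imp_continuous_on by blast
  have contg: "continuous_on UNIV g" unfolding g_def bregman_def
    by (intro continuous_intros continuous_on_compose2[OF contpsi]) auto
  define R' where "R' = max R (norm (z1 - z))"
  define K where "K = Zs \<inter> cball z R'"
  have "compact K" unfolding K_def using Z by auto
  moreover have "K \<noteq> {}" using z1 unfolding K_def R'_def by (auto simp: dist_norm norm_minus_commute)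
  moreover have "continuous_on K g" using contg continuous_on_subset by blast
  ultimately obtain m where m: "m \<in> K" "\<forall>v\<in>K. g m \<le> g v" using continuous_attains_inf by blast
  have z1K: "z1 \<in> K" using z1 unfolding K_def R'_def by (auto simp: dist_norm norm_minus_commute)
  have mmin: "\<forall>v\<in>Zs. g m \<le> g v"
  proof
    fix v assume v: "v \<in> Zs"
    show "g m \<le> g v"
    proof (cases "v \<in> K")
      case True then show ?thesis using m by auto
    next
      case False
      then have "norm (v - z) > R" using v unfolding K_def R'_def by (auto simp: dist_norm norm_minus_commute)
      then show ?thesis using far[of v] m z1K by force
    qed
  qed
  have mZ: "m \<in> Zs" using m K_def by auto
  have ex: "\<exists>x. is_arg_min g (\<lambda>x. x \<in> Zs) x"
    using mZ mmin unfolding is_arg_min_def by (meson not_le)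
  define pm where "pm = prox psi gpsi Zs \<xi> z"
  have pm: "is_arg_min g (\<lambda>x. x \<in> Zs) pm"
    unfolding pm_def prox_def arg_min_on_def arg_min_def g_def[symmetric] using someI_ex[OF ex] .
  then have pmZ: "pm \<in> Zs" and pmmin: "\<forall>v\<in>Zs. g pm \<le> g v" unfolding is_arg_min_def by (auto simp: not_less)
  have opt: "(\<xi> + gpsi pm - gpsi z) \<bullet> (v - pm) \<ge> 0" if v: "v \<in> Zs" for v
  proof -
    define dd where "dd = v - pm"
    define f where "f u = - psi (pm + u *\<^sub>R dd)" for u
    have d0: "((\<lambda>u. psi (pm + u *\<^sub>R dd)) has_real_derivative (gpsi pm \<bullet> dd)) (at 0 within {0..1})"
      by (rule line_deriv[where S=UNIV]) (use pd has_derivative_at_withinI in auto)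
    have d: "(f has_real_derivative (- (gpsi pm \<bullet> dd))) (at 0 within {0..1})"
      unfolding f_def using DERIV_minus[OF d0] .
    have "f u - f 0 \<le> u * (\<xi> \<bullet> dd - gpsi z \<bullet> dd) + u^2 * 0" if "0 < u" "u < 1" for u
    proof -
      have e: "pm + u *\<^sub>R dd = (1 - u) *\<^sub>R pm + u *\<^sub>R v" unfolding dd_def by (simp add: algebra_simps)
      have "pm + u *\<^sub>R dd \<in> Zs" unfolding e using Z(2) pmZ v that
        by (intro convexD) auto
      then have "g pm \<le> g (pm + u *\<^sub>R dd)" using pmmin by auto
      then have "\<xi> \<bullet> pm + (psi pm - psi z - gpsi z \<bullet> (pm - z)) \<le> \<xi> \<bullet> (pm + u *\<^sub>R dd) + (psi (pm + u *\<^sub>R dd) - psi z - gpsi z \<bullet> (pm + u *\<^sub>R dd - z))"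
        unfolding g_def bregman_def .
      then have "- psi (pm + u *\<^sub>R dd) + psi pm \<le> u * (\<xi> \<bullet> dd) - u * (gpsi z \<bullet> dd)"
        by (simp add: inner_add_right inner_diff_right)
      then show ?thesis unfolding f_def by (simp add: algebra_simps)
    qed
    from deriv_bound[OF d this] show ?thesis unfolding dd_def by (simp add: inner_add_left inner_diff_left)
  qed
  have "\<xi> \<bullet> (pm - u) \<le> bregman psi gpsi u z - bregman psi gpsi u pm - bregman psi gpsi pm z"
    if u: "u \<in> Zs" for u
  proof -
    have "(\<xi> + gpsi pm - gpsi z) \<bullet> (u - pm) \<ge> 0" using opt u by auto
    then show ?thesis unfolding bregman_def
      by (simp add: inner_add_left inner_diff_left inner_diff_right algebra_simps)
  qed
  then show ?thesis using pmZ unfolding pm_def by blast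
qed

lemma grad_x:
  fixes phi :: "'x::euclidean_space \<times> 'y::euclidean_space \<Rightarrow> real"
  assumes cvx: "\<forall>y\<in>Ys. convex_on Xs (\<lambda>x. phi (x, y))"
    and diff: "\<forall>p\<in>Xs \<times> Ys. (phi has_derivative (\<lambda>(h, k). gx p \<bullet> h + gy p \<bullet> k)) (at p within Xs \<times> Ys)"
    and x: "x \<in> Xs" "x' \<in> Xs" and y: "y \<in> Ys"
  shows "gx (x, y) \<bullet> (x' - x) \<le> phi (x', y) - phi (x, y)"
proof -
  define p where "p = (x, y)"
  have eq: "(\<lambda>(h, k). gx p \<bullet> h + gy p \<bullet> k) = (\<lambda>v. (gx p, gy p) \<bullet> v)" by (auto simp: inner_Pair)
  have cx: "convex Xs" using cvx y convex_on_def by blast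
  have mem: "(1 - u) *\<^sub>R x + u *\<^sub>R x' \<in> Xs" if "u \<in> {0..1}" for u
    using convexD[OF cx x(1) x(2), of "1 - u" u] that by auto
  have pe: "p + u *\<^sub>R (x' - x, 0) = ((1 - u) *\<^sub>R x + u *\<^sub>R x', y)" for u
    unfolding p_def by (simp add: algebra_simps)
  have d: "((\<lambda>u. phi (p + u *\<^sub>R (x' - x, 0))) has_real_derivative ((gx p, gy p) \<bullet> (x' - x, 0))) (at 0 within {0..1})"
  proof (rule line_deriv[where S="Xs \<times> Ys"])
    have "(phi has_derivative (\<lambda>(h, k). gx p \<bullet> h + gy p \<bullet> k)) (at p within Xs \<times> Ys)"
      using diff x y unfolding p_def by blast
    then show "(phi has_derivative (\<bullet>) (gx p, gy p)) (at p within Xs \<times> Ys)" unfolding eq .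
  next
    fix u :: real assume "u \<in> {0..1}"
    then show "p + u *\<^sub>R (x' - x, 0) \<in> Xs \<times> Ys" unfolding pe using mem y by auto
  qed
  have "phi (p + u *\<^sub>R (x' - x, 0)) - phi (p + 0 *\<^sub>R (x' - x, 0)) \<le> u * (phi (x', y) - phi (x, y)) + u^2 * 0"
    if "0 < u" "u < 1" for u
  proof -
    have "phi ((1 - u) *\<^sub>R x + u *\<^sub>R x', y) \<le> (1 - u) * phi (x, y) + u * phi (x', y)"
      using convex_onD[OF bspec[OF cvx y], of u x x'] that x by auto
    then show ?thesis unfolding pe by (simp add: p_def algebra_simps)
  qed
  from deriv_bound[OF d this] show ?thesis by (simp add: p_def inner_Pair)
qed

lemma grad_y:
  fixes phi :: "'x::euclidean_space \<times> 'y::euclidean_space \<Rightarrow> real"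
  assumes ccv: "\<forall>x\<in>Xs. concave_on Ys (\<lambda>y. phi (x, y))"
    and diff: "\<forall>p\<in>Xs \<times> Ys. (phi has_derivative (\<lambda>(h, k). gx p \<bullet> h + gy p \<bullet> k)) (at p within Xs \<times> Ys)"
    and x: "x \<in> Xs" and y: "y \<in> Ys" "y' \<in> Ys"
  shows "phi (x, y') - phi (x, y) \<le> gy (x, y) \<bullet> (y' - y)"
proof -
  define p where "p = (x, y)"
  have eq: "(\<lambda>(h, k). gx p \<bullet> h + gy p \<bullet> k) = (\<lambda>v. (gx p, gy p) \<bullet> v)" by (auto simp: inner_Pair)
  have cvx: "convex_on Ys (\<lambda>y. - phi (x, y))" using ccv x unfolding concave_on_def by blast
  have cy: "convex Ys" using cvx convex_on_def by blast
  have mem: "(1 - u) *\<^sub>R y + u *\<^sub>R y' \<in> Ys" if "u \<in> {0..1}" for u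
    using convexD[OF cy y(1) y(2), of "1 - u" u] that by auto
  have pe: "p + u *\<^sub>R (0, y' - y) = (x, (1 - u) *\<^sub>R y + u *\<^sub>R y')" for u
    unfolding p_def by (simp add: algebra_simps)
  have d0: "((\<lambda>u. phi (p + u *\<^sub>R (0, y' - y))) has_real_derivative ((gx p, gy p) \<bullet> (0, y' - y))) (at 0 within {0..1})"
  proof (rule line_deriv[where S="Xs \<times> Ys"])
    have "(phi has_derivative (\<lambda>(h, k). gx p \<bullet> h + gy p \<bullet> k)) (at p within Xs \<times> Ys)"
      using diff x y unfolding p_def by blast
    then show "(phi has_derivative (\<bullet>) (gx p, gy p)) (at p within Xs \<times> Ys)" unfolding eq .
  next
    fix u :: real assume "u \<in> {0..1}"
    then show "p + u *\<^sub>R (0, y' - y) \<in> Xs \<times> Ys" unfolding pe using mem x by auto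
  qed
  have d: "((\<lambda>u. - phi (p + u *\<^sub>R (0, y' - y))) has_real_derivative - ((gx p, gy p) \<bullet> (0, y' - y))) (at 0 within {0..1})"
    using DERIV_minus[OF d0] .
  have "- phi (p + u *\<^sub>R (0, y' - y)) - - phi (p + 0 *\<^sub>R (0, y' - y)) \<le> u * (- phi (x, y') + phi (x, y)) + u^2 * 0"
    if "0 < u" "u < 1" for u
  proof -
    have "- phi (x, (1 - u) *\<^sub>R y + u *\<^sub>R y') \<le> (1 - u) * - phi (x, y) + u * - phi (x, y')"
      using convex_onD[OF cvx, of u y y'] that y by auto
    then show ?thesis unfolding pe by (simp add: p_def algebra_simps)
  qed
  from deriv_bound[OF d this] show ?thesis by (simp add: p_def inner_Pair)
qed

lemma telesc:
  fixes w d :: "nat \<Rightarrow> real"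
  assumes w_nonneg: "\<forall>t\<ge>1. 0 \<le> w t"
    and w_mono: "\<forall>s t. 1 \<le> s \<longrightarrow> s \<le> t \<longrightarrow> w s \<le> w t"
    and dd: "\<And>t. 0 \<le> d t" "\<And>t. d t \<le> Om"
    and T: "1 \<le> T"
  shows "(\<Sum>t = 1..T. w t * (d t - d (Suc t))) \<le> w T * Om"
proof -
  have "(\<Sum>t = 1..T. w t * (d t - d (Suc t))) + w T * d (Suc T) \<le> w T * Om"
    using T
  proof (induction T rule: nat_induct_at_least)
    case base
    have "w 1 * d 1 \<le> w 1 * Om" using dd(2)[of 1] w_nonneg by (intro mult_left_mono) auto
    then show ?case by (simp add: algebra_simps)
  next
    case (Suc n)
    have "(\<Sum>t = 1..Suc n. w t * (d t - d (Suc t))) + w (Suc n) * d (Suc (Suc n))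
        = ((\<Sum>t = 1..n. w t * (d t - d (Suc t))) + w n * d (Suc n)) + (w (Suc n) - w n) * d (Suc n)"
      using Suc.hyps by (simp add: algebra_simps)
    also have "\<dots> \<le> w n * Om + (w (Suc n) - w n) * Om"
      using Suc.IH w_mono Suc.hyps dd(2)[of "Suc n"] by (intro add_mono mult_left_mono) auto
    finally show ?case by (simp add: algebra_simps)
  qed
  moreover have "0 \<le> w T * d (Suc T)" using w_nonneg T dd(1) by simp
  ultimately show ?thesis by linarith
qed

lemma powsum:
  fixes q :: real
  assumes q: "0 \<le> q" and T: "1 \<le> T"
  shows "real T powr (q + 1) \<le> (q + 1) * (\<Sum>t = 1..T. real t powr q)"
  using T
proof (induction T rule: nat_induct_at_least)
  case base
  then show ?case using q by simp
next
  case (Suc n)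
  have "\<exists>\<zeta>. real n < \<zeta> \<and> \<zeta> < real (Suc n) \<and>
      (real (Suc n) powr (q + 1) - real n powr (q + 1) = (real (Suc n) - real n) * ((\<lambda>x. (q + 1) * x powr (q + 1 - 1)) \<zeta>))"
  proof (rule MVT2)
    show "real n < real (Suc n)" by simp
  next
    fix x :: real assume "real n \<le> x" "x \<le> real (Suc n)"
    then have "x > 0" using Suc.hyps by auto
    then show "((\<lambda>a. a powr (q + 1)) has_real_derivative (\<lambda>x. (q + 1) * x powr (q + 1 - 1)) x) (at x)"
      by (simp only: has_real_derivative_powr)
  qed
  then obtain \<zeta> where z: "\<zeta> > real n" "\<zeta> < real (Suc n)"
    and e: "real (Suc n) powr (q + 1) - real n powr (q + 1) = (q + 1) * \<zeta> powr q" by auto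
  have "\<zeta> powr q \<le> real (Suc n) powr q" using z q Suc.hyps by (intro powr_mono2) auto
  then have "(q + 1) * \<zeta> powr q \<le> (q + 1) * real (Suc n) powr q"
    using q by (intro mult_left_mono) auto
  then have "real (Suc n) powr (q + 1) \<le> real n powr (q + 1) + (q + 1) * real (Suc n) powr q"
    using e by linarith
  also have "\<dots> \<le> (q + 1) * (\<Sum>t = 1..n. real t powr q) + (q + 1) * real (Suc n) powr q"
    using Suc.IH by simp
  finally show ?case using Suc.hyps by (simp add: algebra_simps)
qed

theorem theorem5:
  fixes Xs :: "'x::euclidean_space set" and Ys :: "'y::euclidean_space set"
    and nrm :: "'x \<times> 'y \<Rightarrow> real"
    and phi :: "'x \<times> 'y \<Rightarrow> real"
    and gx :: "'x \<times> 'y \<Rightarrow> 'x" and gy :: "'x \<times> 'y \<Rightarrow> 'y"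
    and L :: real
    and psi :: "'x \<times> 'y \<Rightarrow> real" and gpsi :: "'x \<times> 'y \<Rightarrow> 'x \<times> 'y"
    and z0 :: "'x \<times> 'y" and z zt :: "nat \<Rightarrow> 'x \<times> 'y"
    and tau w :: "nat \<Rightarrow> real"
  assumes norm: "is_norm nrm"
    and Xs: "closed Xs" "convex Xs" and Ys: "closed Ys" "convex Ys"
    and cvx: "\<forall>y\<in>Ys. convex_on Xs (\<lambda>x. phi (x, y))"
    and ccv: "\<forall>x\<in>Xs. concave_on Ys (\<lambda>y. phi (x, y))"
    and diff: "\<forall>p\<in>Xs \<times> Ys. (phi has_derivative (\<lambda>(h, k). gx p \<bullet> h + gy p \<bullet> k)) (at p within Xs \<times> Ys)"
    and Fbdd: "bdd_above ((\<lambda>p. dual_norm nrm (sp_op gx gy p)) ` (Xs \<times> Ys))"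
    and Lip: "\<forall>p\<in>Xs \<times> Ys. \<forall>p'\<in>Xs \<times> Ys.
                dual_norm nrm (sp_op gx gy p - sp_op gx gy p') \<le> L * nrm (p - p')"
    and psi_diff: "\<forall>p. (psi has_derivative (\<lambda>h. gpsi p \<bullet> h)) (at p)"
    and psi_sc: "strongly_convex_wrt nrm psi"
    and Omega_bdd: "bdd_above {bregman psi gpsi p p' | p p'. p \<in> Xs \<times> Ys \<and> p' \<in> Xs \<times> Ys}"
    and z0: "z0 \<in> Xs \<times> Ys" and z_0: "z 0 = z0"
    and tau: "\<forall>t. 0 < tau t"
    and zt_def: "\<forall>t. zt t = prox psi gpsi (Xs \<times> Ys) (tau t *\<^sub>R sp_op gx gy (z t)) (z t)"
    and z_Suc: "\<forall>t. z (Suc t) = prox psi gpsi (Xs \<times> Ys) (tau t *\<^sub>R sp_op gx gy (zt t)) (z t)"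
    and w_nonneg: "\<forall>t\<ge>1. 0 \<le> w t"
    and w_mono: "\<forall>s t. 1 \<le> s \<longrightarrow> s \<le> t \<longrightarrow> w s \<le> w t"
  shows
   "(let Omega = Sup {bregman psi gpsi p p' | p p'. p \<in> Xs \<times> Ys \<and> p' \<in> Xs \<times> Ys};
         delta = (\<lambda>t. tau t * (sp_op gx gy (zt t) \<bullet> (zt t - z (Suc t)))
                        - bregman psi gpsi (z (Suc t)) (z t));
         S = (\<lambda>T. \<Sum>t = 1..T. w t * tau t);
         zbar = (\<lambda>T. (1 / S T) *\<^sub>R (\<Sum>t = 1..T. (w t * tau t) *\<^sub>R zt t))
     in (\<forall>T\<ge>1. 0 < S T \<longrightarrow>
           (\<forall>x\<in>Xs. \<forall>y\<in>Ys.
              phi (fst (zbar T), y) - phi (x, snd (zbar T))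
                \<le> (w T * Omega + (\<Sum>t = 1..T. w t * delta t)) / S T))
      \<and> (\<forall>q::real. 0 \<le> q \<and> (\<forall>t. tau t = 1 / L) \<and> (\<forall>t\<ge>1. w t = real t powr q) \<longrightarrow>
           (\<forall>t. delta t \<le> 0) \<and>
           (\<forall>T\<ge>1. \<forall>x\<in>Xs. \<forall>y\<in>Ys.
              phi (fst (zbar T), y) - phi (x, snd (zbar T)) \<le> (q + 1) * L * Omega / real T)))"
proof -
  define Z where "Z = Xs \<times> Ys"
  define F where "F = sp_op gx gy"
  define D where "D = bregman psi gpsi"
  have ZZ: "closed Z" "convex Z" "Z \<noteq> {}" unfolding Z_def using Xs Ys z0
    by (auto intro: closed_Times convex_Times)
  note TP = prox_tp[OF psi_diff psi_sc norm ZZ]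
  have zZ: "z t \<in> Z" for t
  proof (cases t)
    case 0 then show ?thesis using z0 z_0 Z_def by simp
  next
    case (Suc s) then show ?thesis using z_Suc TP[of "tau s *\<^sub>R sp_op gx gy (zt s)" "z s"] unfolding Z_def by simp
  qed
  have ztZ: "zt t \<in> Z" for t using zt_def TP[of "tau t *\<^sub>R sp_op gx gy (z t)" "z t"] unfolding Z_def by simp
  have TP1: "(tau t *\<^sub>R F (zt t)) \<bullet> (z (Suc t) - u) \<le> D u (z t) - D u (z (Suc t)) - D (z (Suc t)) (z t)"
    if "u \<in> Z" for t u
    using TP[of "tau t *\<^sub>R sp_op gx gy (zt t)" "z t"] that z_Suc unfolding F_def D_def Z_def by auto
  have TP2: "(tau t *\<^sub>R F (z t)) \<bullet> (zt t - u) \<le> D u (z t) - D u (zt t) - D (zt t) (z t)"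
    if "u \<in> Z" for t u
    using TP[of "tau t *\<^sub>R sp_op gx gy (z t)" "z t"] that zt_def unfolding F_def D_def Z_def by auto
  have Dsc: "1/2 * (nrm (a - b))^2 \<le> D a b" for a b unfolding D_def by (rule breg_sc[OF psi_diff psi_sc])
  have Dnn: "0 \<le> D a b" for a b
  proof -
    have "0 \<le> 1/2 * (nrm (a - b))^2" by simp
    then show ?thesis using Dsc[of a b] by linarith
  qed
  define Om where "Om = Sup {bregman psi gpsi p p' | p p'. p \<in> Xs \<times> Ys \<and> p' \<in> Xs \<times> Ys}"
  have Dle: "D a b \<le> Om" if "a \<in> Z" "b \<in> Z" for a b
    unfolding Om_def D_def using that Z_def by (intro cSup_upper Omega_bdd) auto
  have Om0: "0 \<le> Om" using Dle[OF zZ zZ, of 0 0] Dnn by (meson order_trans)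
  define delta where "delta = (\<lambda>t. tau t * (sp_op gx gy (zt t) \<bullet> (zt t - z (Suc t)))
                        - bregman psi gpsi (z (Suc t)) (z t))"
  define S where "S = (\<lambda>T. \<Sum>t = 1..T. w t * tau t)"
  define zbar where "zbar = (\<lambda>T. (1 / S T) *\<^sub>R (\<Sum>t = 1..T. (w t * tau t) *\<^sub>R zt t))"
  have gap: "phi (fst p, y) - phi (x, snd p) \<le> F p \<bullet> (p - (x, y))" if "p \<in> Z" "x \<in> Xs" "y \<in> Ys" for p x y
  proof -
    obtain x' y' where p0: "p = (x', y')" by (cases p)
    then have p: "p = (x', y')" "x' \<in> Xs" "y' \<in> Ys" using that(1) unfolding Z_def by auto
    have 1: "gx (x', y') \<bullet> (x - x') \<le> phi (x, y') - phi (x', y')" using grad_x[OF cvx diff] p that by blast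
    have 2: "phi (x', y) - phi (x', y') \<le> gy (x', y') \<bullet> (y - y')" using grad_y[OF ccv diff] p that by blast
    have "F p \<bullet> (p - (x, y)) = gx (x', y') \<bullet> (x' - x) - gy (x', y') \<bullet> (y' - y)"
      unfolding p F_def sp_op_def by (simp add: inner_Pair)
    moreover have "gx (x', y') \<bullet> (x' - x) = - (gx (x', y') \<bullet> (x - x'))" by (simp add: inner_diff_right)
    moreover have "gy (x', y') \<bullet> (y' - y) = - (gy (x', y') \<bullet> (y - y'))" by (simp add: inner_diff_right)
    ultimately show ?thesis using 1 2 p by simp
  qed
  have step: "tau t * (F (zt t) \<bullet> (zt t - u)) \<le> delta t + D u (z t) - D u (z (Suc t))" if "u \<in> Z" for t u
  proof -
    have "tau t * (F (zt t) \<bullet> (zt t - u)) = tau t * (F (zt t) \<bullet> (zt t - z (Suc t))) + (tau t *\<^sub>R F (zt t)) \<bullet> (z (Suc t) - u)"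
      by (simp add: inner_diff_right algebra_simps)
    then show ?thesis using TP1[OF that, of t] unfolding delta_def F_def D_def by simp
  qed
  have P1: "\<forall>T\<ge>1. 0 < S T \<longrightarrow> (\<forall>x\<in>Xs. \<forall>y\<in>Ys.
              phi (fst (zbar T), y) - phi (x, snd (zbar T))
                \<le> (w T * Om + (\<Sum>t = 1..T. w t * delta t)) / S T)"
  proof (intro allI impI ballI)
    fix T :: nat and x y assume T: "1 \<le> T" and S: "0 < S T" and x: "x \<in> Xs" and y: "y \<in> Ys"
    define u where "u = (x, y)"
    have uZ: "u \<in> Z" using x y u_def Z_def by simp
    define a where "a t = w t * tau t / S T" for t
    have a0: "0 \<le> a t" if "t \<in> {1..T}" for t using that w_nonneg tau S unfolding a_def
      by (simp add: less_imp_le)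
    have a1: "(\<Sum>t = 1..T. a t) = 1" unfolding a_def using S by (simp add: S_def sum_divide_distrib[symmetric])
    have ne: "{1..T} \<noteq> {}" using T by simp
    have fz: "fst (zbar T) = (\<Sum>t = 1..T. a t *\<^sub>R fst (zt t))"
      unfolding zbar_def a_def by (simp add: fst_sum scaleR_sum_right divide_inverse_commute)
    have sz: "snd (zbar T) = (\<Sum>t = 1..T. a t *\<^sub>R snd (zt t))"
      unfolding zbar_def a_def by (simp add: snd_sum scaleR_sum_right divide_inverse_commute)
    have ztX: "fst (zt t) \<in> Xs" "snd (zt t) \<in> Ys" for t using ztZ[of t] Z_def by (auto simp: mem_Times_iff)
    have J1: "phi (fst (zbar T), y) \<le> (\<Sum>t = 1..T. a t * phi (fst (zt t), y))"
      unfolding fz using convex_on_sum[OF _ ne bspec[OF cvx y] a1 a0] ztX by auto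
    have cc: "convex_on Ys (\<lambda>y. - phi (x, y))" using ccv x unfolding concave_on_def by blast
    have J2: "- phi (x, snd (zbar T)) \<le> (\<Sum>t = 1..T. a t * - phi (x, snd (zt t)))"
      unfolding sz using convex_on_sum[OF _ ne cc a1 a0] ztX by auto
    have "phi (fst (zbar T), y) - phi (x, snd (zbar T)) \<le> (\<Sum>t = 1..T. a t * (phi (fst (zt t), y) - phi (x, snd (zt t))))"
      using J1 J2 by (simp add: right_diff_distrib sum_subtractf sum_negf)
    also have "\<dots> \<le> (\<Sum>t = 1..T. w t / S T * (delta t + D u (z t) - D u (z (Suc t))))"
    proof (rule sum_mono)
      fix t assume t: "t \<in> {1..T}"
      have "phi (fst (zt t), y) - phi (x, snd (zt t)) \<le> F (zt t) \<bullet> (zt t - u)"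
        using gap[OF ztZ x y] u_def by simp
      then have "tau t * (phi (fst (zt t), y) - phi (x, snd (zt t))) \<le> tau t * (F (zt t) \<bullet> (zt t - u))"
        using tau by (intro mult_left_mono) (auto simp: less_imp_le)
      then have "tau t * (phi (fst (zt t), y) - phi (x, snd (zt t))) \<le> delta t + D u (z t) - D u (z (Suc t))"
        using step[OF uZ, of t] by linarith
      then have "w t / S T * (tau t * (phi (fst (zt t), y) - phi (x, snd (zt t)))) \<le> w t / S T * (delta t + D u (z t) - D u (z (Suc t)))"
        using w_nonneg t S by (intro mult_left_mono) auto
      then show "a t * (phi (fst (zt t), y) - phi (x, snd (zt t))) \<le> w t / S T * (delta t + D u (z t) - D u (z (Suc t)))"
        unfolding a_def by (simp add: algebra_simps)
    qed
    also have "\<dots> = ((\<Sum>t = 1..T. w t * delta t) + (\<Sum>t = 1..T. w t * (D u (z t) - D u (z (Suc t))))) / S T"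
    proof -
      have "(\<Sum>t = 1..T. w t / S T * (delta t + D u (z t) - D u (z (Suc t))))
          = (\<Sum>t = 1..T. (w t * delta t + w t * (D u (z t) - D u (z (Suc t)))) / S T)"
        using S by (intro sum.cong) (auto simp: field_simps)
      also have "\<dots> = ((\<Sum>t = 1..T. w t * delta t) + (\<Sum>t = 1..T. w t * (D u (z t) - D u (z (Suc t))))) / S T"
        by (simp only: sum_divide_distrib[symmetric] sum.distrib)
      finally show ?thesis .
    qed
    also have "\<dots> \<le> ((\<Sum>t = 1..T. w t * delta t) + w T * Om) / S T"
      using telesc[OF w_nonneg w_mono, of "\<lambda>t. D u (z t)" Om T] Dnn Dle[OF uZ zZ] T S
      by (intro divide_right_mono add_left_mono) auto
    finally show "phi (fst (zbar T), y) - phi (x, snd (zbar T)) \<le> (w T * Om + (\<Sum>t = 1..T. w t * delta t)) / S T"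
      by (simp add: add.commute)
  qed
  have P2: "\<forall>q::real. 0 \<le> q \<and> (\<forall>t. tau t = 1 / L) \<and> (\<forall>t\<ge>1. w t = real t powr q) \<longrightarrow>
           (\<forall>t. delta t \<le> 0) \<and>
           (\<forall>T\<ge>1. \<forall>x\<in>Xs. \<forall>y\<in>Ys.
              phi (fst (zbar T), y) - phi (x, snd (zbar T)) \<le> (q + 1) * L * Om / real T)"
  proof (intro allI impI)
    fix q :: real assume H: "0 \<le> q \<and> (\<forall>t. tau t = 1 / L) \<and> (\<forall>t\<ge>1. w t = real t powr q)"
    then have q: "0 \<le> q" and tL: "\<And>t. tau t = 1 / L" and wq: "\<And>t. t \<ge> 1 \<Longrightarrow> w t = real t powr q" by auto
    have L: "0 < L"
    proof -
      have "0 < tau 0" using tau by blast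
      then have "0 < 1 / L" using tL[of 0] by simp
      then show ?thesis by (simp add: zero_less_divide_iff)
    qed
    have dneg: "delta t \<le> 0" for t
    proof -
      define A where "A = zt t - z t"
      define B where "B = zt t - z (Suc t)"
      have t2: "(tau t *\<^sub>R F (z t)) \<bullet> B \<le> D (z (Suc t)) (z t) - D (z (Suc t)) (zt t) - D (zt t) (z t)"
        using TP2[OF zZ, of t "Suc t"] unfolding B_def .
      have e: "delta t = tau t * ((F (zt t) - F (z t)) \<bullet> B) + (tau t *\<^sub>R F (z t)) \<bullet> B - D (z (Suc t)) (z t)"
        unfolding delta_def F_def D_def B_def by (simp add: inner_diff_left algebra_simps)
      have "(F (zt t) - F (z t)) \<bullet> B \<le> dual_norm nrm (F (zt t) - F (z t)) * nrm B"
        by (rule dual_ineq[OF norm])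
      also have "\<dots> \<le> L * nrm A * nrm B"
        using Lip ztZ[of t] zZ[of t] norm_props(1)[OF norm, of B] unfolding F_def A_def Z_def
        by (intro mult_right_mono) auto
      finally have i0: "(F (zt t) - F (z t)) \<bullet> B \<le> L * nrm A * nrm B" .
      have "tau t * ((F (zt t) - F (z t)) \<bullet> B) \<le> tau t * (L * nrm A * nrm B)"
        using i0 tau by (intro mult_left_mono) (auto simp: less_imp_le)
      also have "\<dots> = nrm A * nrm B" using tL[of t] L by simp
      finally have i1: "tau t * ((F (zt t) - F (z t)) \<bullet> B) \<le> nrm A * nrm B" .
      have "nrm A * nrm B \<le> 1/2 * (nrm A)^2 + 1/2 * (nrm B)^2"
      proof -
        have "0 \<le> (nrm A - nrm B)^2" by simp
        moreover have "(nrm A - nrm B)^2 = (nrm A)^2 - 2 * (nrm A * nrm B) + (nrm B)^2"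
          by (simp add: power2_diff)
        ultimately show ?thesis by linarith
      qed
      moreover have "1/2 * (nrm A)^2 \<le> D (zt t) (z t)" using Dsc unfolding A_def by blast
      moreover have "1/2 * (nrm B)^2 \<le> D (z (Suc t)) (zt t)"
        using Dsc[of "z (Suc t)" "zt t"] norm_props(6)[OF norm] unfolding B_def by metis
      ultimately show ?thesis using e i1 t2 by linarith
    qed
    have bnd: "phi (fst (zbar T), y) - phi (x, snd (zbar T)) \<le> (q + 1) * L * Om / real T"
      if T: "T \<ge> 1" and x: "x \<in> Xs" and y: "y \<in> Ys" for T x y
    proof -
      define P where "P = (\<Sum>t = 1..T. real t powr q)"
      have Pp: "P > 0" unfolding P_def using T by (intro sum_pos) auto
      have SP: "S T = P / L" unfolding S_def P_def using wq tL by (simp add: sum_divide_distrib)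
      have Sp: "0 < S T" using SP Pp L by simp
      have sd: "(\<Sum>t = 1..T. w t * delta t) \<le> 0"
        using dneg w_nonneg by (intro sum_nonpos) (simp add: mult_nonneg_nonpos)
      have "phi (fst (zbar T), y) - phi (x, snd (zbar T)) \<le> (w T * Om + (\<Sum>t = 1..T. w t * delta t)) / S T"
        using P1 T Sp x y by blast
      also have "\<dots> \<le> w T * Om / S T" using sd Sp by (intro divide_right_mono) auto
      also have "\<dots> = real T powr q * Om * L / P" using SP wq[OF T] L by simp
      also have "\<dots> \<le> (q + 1) * L * Om / real T"
      proof -
        have pw: "real T powr q * real T \<le> (q + 1) * P"
          using powsum[OF q T] T by (simp add: P_def powr_add)
        have "real T powr q * Om * L * real T \<le> (q + 1) * L * Om * P"
          using mult_right_mono[OF pw, of "Om * L"] Om0 L by (simp add: algebra_simps)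
        then show ?thesis using Pp T by (simp add: divide_le_eq le_divide_eq field_simps)
      qed
      finally show ?thesis .
    qed
    show "(\<forall>t. delta t \<le> 0) \<and> (\<forall>T\<ge>1. \<forall>x\<in>Xs. \<forall>y\<in>Ys.
              phi (fst (zbar T), y) - phi (x, snd (zbar T)) \<le> (q + 1) * L * Om / real T)"
      using dneg bnd by blast
  qed
  show ?thesis unfolding Let_def
    using P1 P2 unfolding Om_def delta_def S_def zbar_def by blast
qed

end
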